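(* Let $d\ge1$ and let $G_1=(V_1,E_1)$ and $G_2=(V_2,E_2)$ be two graphs with $G_1\cap G_2\cong K_2$ and $E_1\cap E_2=\{e\}$, such that $e$ is not a coloop in either $\mathcal{R}_d(G_1)$ or $\mathcal{R}_d(G_2)$. If $G$ is the graphical parallel connection of $G_1$ and $G_2$ along $e$, then $\mathcal{R}_d(G)=P(\mathcal{R}_d(G_1),\mathcal{R}_d(G_2))$. Moreover, if $G'$ is the graphical 2-sum of $G_1$ and $G_2$ along $e$, then $\mathcal{R}_d(G')=\mathcal{R}_d(G_1)\oplus_2\mathcal{R}_d(G_2)$.
   Context: For a graph $G=(V,E)$ and a generic $p:V\to\mathbb{R}^d$ (coordinates algebraically independent over $\mathbb{Q}$), the rigidity matrix $R(G,p)$ has a row for each $uv\in E$ with $p(u)-p(v)$ in the $d$ columns of $u$, $p(v)-p(u)$ in those of $v$, zeros elsewhere. $\mathcal{R}_d(G)$ is its row matroid on $E$. A coloop of a matroid is an element contained in no circuit. Graphical operations: for graphs $G_1,G_2$ with $G_1\cap G_2\cong K_2$ and $E_1\cap E_2=\{e\}$, the graphical parallel connection along $e$ is $G_1\cup G_2$ and the graphical 2-sum along $e$ is $(G_1\cup G_2)-e$. Matroid operations: for matroids $\mathcal{M}_1,\mathcal{M}_2$ on $E_1,E_2$ with $E_1\cap E_2=\{e\}$, $e$ neither a loop nor a coloop of either, the parallel connection $P(\mathcal{M}_1,\mathcal{M}_2)$ is the matroid on $E_1\cup E_2$ whose circuits are the circuits of $\mathcal{M}_1$, the circuits of $\mathcal{M}_2$,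 and the sets $(C_1\cup C_2)-e$ where $C_i$ is a circuit of $\mathcal{M}_i$ containing $e$ for $i=1,2$. The 2-sum $\mathcal{M}_1\oplus_2\mathcal{M}_2$ is the matroid on $(E_1\cup E_2)-e$ whose circuits are the circuits of $\mathcal{M}_1$ or $\mathcal{M}_2$ not containing $e$, together with the sets $(C_1\cup C_2)-e$ where $C_i$ is a circuit of $\mathcal{M}_i$ containing $e$ for $i=1,2$. *)

theory Defs
  imports Complex_Main
begin

definition simple_graph :: "'v set \<Rightarrow> 'v set set \<Rightarrow> bool" where
  "simple_graph V E \<longleftrightarrow> finite V \<and> (\<forall>x\<in>E. x \<subseteq> V \<and> card x = 2)"

text \<open>A polynomial is given by a finite set M of (distinct) monomials (exponent functions
  supported in X) and rational coefficients c.\<close>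
definition alg_indep_rat :: "'a set \<Rightarrow> ('a \<Rightarrow> real) \<Rightarrow> bool" where
  "alg_indep_rat X x \<longleftrightarrow>
     (\<forall>(M :: ('a \<Rightarrow> nat) set) (c :: ('a \<Rightarrow> nat) \<Rightarrow> rat).
        finite M \<and> (\<forall>m\<in>M. \<forall>a. m a \<noteq> 0 \<longrightarrow> a \<in> X) \<and>
        (\<Sum>m\<in>M. of_rat (c m) * (\<Prod>a\<in>X. x a ^ m a)) = 0
        \<longrightarrow> (\<forall>m\<in>M. c m = 0))"

definition generic :: "nat \<Rightarrow> 'v set \<Rightarrow> ('v \<Rightarrow> nat \<Rightarrow> real) \<Rightarrow> bool" where
  "generic d V p \<longleftrightarrow> alg_indep_rat (V \<times> {..<d}) (\<lambda>(v, i). p v i)"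

text \<open>Row of the rigidity matrix R(G,p) for the edge e = {u,v}; the columns are
  indexed by pairs (w,i), w a vertex, i < d. Entry in the columns of u is p(u) - p(v).\<close>
definition rig_row :: "nat \<Rightarrow> ('v \<Rightarrow> nat \<Rightarrow> real) \<Rightarrow> 'v set \<Rightarrow> 'v \<times> nat \<Rightarrow> real" where
  "rig_row d p e = (\<lambda>(w, i). if w \<in> e \<and> i < d
                              then p w i - p (THE u. u \<in> e \<and> u \<noteq> w) i else 0)"

definition rig_indep :: "nat \<Rightarrow> ('v \<Rightarrow> nat \<Rightarrow> real) \<Rightarrow> 'v set set \<Rightarrow> bool" where
  "rig_indep d p F \<longleftrightarrow>
     (\<forall>c :: 'v set \<Rightarrow> real.
        (\<forall>col. (\<Sum>f\<in>F. c f * rig_row d p f col) = 0) \<longrightarrow> (\<forall>f\<in>F. c f = 0))"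

definition rig_circuits :: "nat \<Rightarrow> ('v \<Rightarrow> nat \<Rightarrow> real) \<Rightarrow> 'v set set \<Rightarrow> 'v set set set" where
  "rig_circuits d p E =
     {C. C \<subseteq> E \<and> \<not> rig_indep d p C \<and> (\<forall>D. D \<subset> C \<longrightarrow> rig_indep d p D)}"

definition is_coloop :: "'e set set \<Rightarrow> 'e \<Rightarrow> bool" where
  "is_coloop \<C> x \<longleftrightarrow> (\<forall>C\<in>\<C>. x \<notin> C)"

definition par_conn_circuits :: "'e set set \<Rightarrow> 'e set set \<Rightarrow> 'e \<Rightarrow> 'e set set" where
  "par_conn_circuits \<C>1 \<C>2 x =
     \<C>1 \<union> \<C>2 \<union> {(C1 \<union> C2) - {x} | C1 C2. C1 \<in> \<C>1 \<and> x \<in> C1 \<and> C2 \<in> \<C>2 \<and> x \<in> C2}"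

definition two_sum_circuits :: "'e set set \<Rightarrow> 'e set set \<Rightarrow> 'e \<Rightarrow> 'e set set" where
  "two_sum_circuits \<C>1 \<C>2 x =
     {C \<in> \<C>1. x \<notin> C} \<union> {C \<in> \<C>2. x \<notin> C} \<union>
     {(C1 \<union> C2) - {x} | C1 C2. C1 \<in> \<C>1 \<and> x \<in> C1 \<and> C2 \<in> \<C>2 \<and> x \<in> C2}"

end

theory Submission
  imports Defs
begin

definition lindep_free :: "('e \<Rightarrow> 'c \<Rightarrow> real) \<Rightarrow> 'e set \<Rightarrow> bool" where
  "lindep_free r F \<longleftrightarrow> (\<forall>c::'e\<Rightarrow>real. (\<forall>col. (\<Sum>f\<in>F. c f * r f col) = 0) \<longrightarrow> (\<forall>f\<in>F. c f = 0))"

definition supp :: "('e \<Rightarrow> real) \<Rightarrow> 'e set" where "supp c = {f. c f \<noteq> 0}"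

definition lc :: "('e \<Rightarrow> 'c \<Rightarrow> real) \<Rightarrow> 'e set \<Rightarrow> ('e \<Rightarrow> real) \<Rightarrow> 'c \<Rightarrow> real" where
  "lc r U c col = (\<Sum>f\<in>U. c f * r f col)"

definition circs :: "('e \<Rightarrow> 'c \<Rightarrow> real) \<Rightarrow> 'e set \<Rightarrow> 'e set set" where
  "circs r E = {C. C \<subseteq> E \<and> \<not> lindep_free r C \<and> (\<forall>D. D \<subset> C \<longrightarrow> lindep_free r D)}"

lemma lc_add: "lc r U (\<lambda>f. a f + b f) col = lc r U a col + lc r U b col"
  by (simp add: lc_def distrib_right sum.distrib)
lemma lc_diff: "lc r U (\<lambda>f. a f - b f) col = lc r U a col - lc r U b col"
  by (simp add: lc_def left_diff_distrib sum_subtractf)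
lemma lc_scale: "lc r U (\<lambda>f. k * a f) col = k * lc r U a col"
  by (simp add: lc_def sum_distrib_left mult.assoc)
lemma lc_delta: "finite U \<Longrightarrow> e \<in> U \<Longrightarrow> lc r U (\<lambda>f. if f = e then 1 else 0) col = r e col"
  by (simp add: lc_def if_distrib[where f="\<lambda>x. x * _"] cong: if_cong)
lemma lc_single:
  assumes "finite U" "e \<in> U" "supp c \<subseteq> {e}"
  shows "lc r U c col = c e * r e col"
proof -
  have "lc r U c col = (\<Sum>f\<in>{e}. c f * r f col)"
    unfolding lc_def by (rule sum.mono_neutral_right) (use assms in \<open>auto simp: supp_def\<close>)
  then show ?thesis by simp
qed

lemma dep_U:
  assumes "finite U" "X \<subseteq> U"
  shows "\<not> lindep_free r X \<longleftrightarrow> (\<exists>c. supp c \<subseteq> X \<and> supp c \<noteq> {} \<and> (\<forall>col. lc r U c col = 0))"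
proof
  assume "\<not> lindep_free r X"
  then obtain c f0 where c: "\<forall>col. (\<Sum>f\<in>X. c f * r f col) = 0" and f0: "f0 \<in> X" "c f0 \<noteq> 0"
    unfolding lindep_free_def by blast
  define c' where "c' = (\<lambda>f. if f \<in> X then c f else 0)"
  have "supp c' \<subseteq> X" by (auto simp: supp_def c'_def)
  moreover have "f0 \<in> supp c'" using f0 by (simp add: supp_def c'_def)
  moreover have "lc r U c' col = 0" for col
  proof -
    have "lc r U c' col = (\<Sum>f\<in>X. c' f * r f col)"
      unfolding lc_def by (rule sum.mono_neutral_right) (use assms in \<open>auto simp: c'_def\<close>)
    also have "\<dots> = (\<Sum>f\<in>X. c f * r f col)" by (simp add: c'_def)
    finally show ?thesis using c by simp
  qed
  ultimately show "\<exists>c. supp c \<subseteq> X \<and> supp c \<noteq> {} \<and> (\<forall>col. lc r U c col = 0)" by blast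
next
  assume "\<exists>c. supp c \<subseteq> X \<and> supp c \<noteq> {} \<and> (\<forall>col. lc r U c col = 0)"
  then obtain c where c: "supp c \<subseteq> X" "supp c \<noteq> {}" "\<forall>col. lc r U c col = 0" by blast
  have "(\<Sum>f\<in>X. c f * r f col) = 0" for col
  proof -
    have "lc r U c col = (\<Sum>f\<in>X. c f * r f col)"
      unfolding lc_def by (rule sum.mono_neutral_right) (use assms c(1) in \<open>auto simp: supp_def\<close>)
    then show ?thesis using c(3) by simp
  qed
  moreover obtain f where "f \<in> supp c" using c(2) by blast
  ultimately show "\<not> lindep_free r X" unfolding lindep_free_def using c(1) by (auto simp: supp_def)
qed

lemma circ_supp:
  assumes "finite U" "C \<in> circs r E" "E \<subseteq> U" "supp c \<subseteq> C" "supp c \<noteq> {}" "\<forall>col. lc r U c col = 0"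
  shows "supp c = C"
proof (rule ccontr)
  assume "supp c \<noteq> C"
  then have "supp c \<subset> C" using assms(4) by blast
  then have "lindep_free r (supp c)" using assms(2) by (auto simp: circs_def)
  moreover have "supp c \<subseteq> U" using assms(2,3,4) by (auto simp: circs_def)
  ultimately show False using dep_U[OF assms(1), of "supp c" r] assms(5,6) by blast
qed

lemma circ_dep:
  assumes "finite U" "C \<in> circs r E" "E \<subseteq> U"
  shows "\<exists>c. supp c = C \<and> (\<forall>col. lc r U c col = 0)"
proof -
  have "C \<subseteq> U" using assms by (auto simp: circs_def)
  then obtain c where "supp c \<subseteq> C" "supp c \<noteq> {}" "\<forall>col. lc r U c col = 0"
    using dep_U[OF assms(1), of C r] assms(2) by (auto simp: circs_def)
  then show ?thesis using circ_supp[OF assms] by blast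
qed

lemma circs_mono: "C \<in> circs r E \<Longrightarrow> E \<subseteq> F \<Longrightarrow> C \<in> circs r F"
  by (auto simp: circs_def)
lemma circs_sub: "C \<in> circs r F \<Longrightarrow> C \<subseteq> E \<Longrightarrow> C \<in> circs r E"
  by (auto simp: circs_def)

lemma half:
  assumes U: "finite U" and C: "C \<in> circs r U" and eU: "e \<in> U" and eC: "e \<notin> C"
    and sa: "supp a \<subseteq> C" and sb: "supp b \<subseteq> C" and dis: "supp a \<inter> supp b = {}"
    and bne: "supp b \<noteq> {}" and cab: "\<And>f. c f = a f + b f"
    and la: "\<And>col. lc r U a col = l * r e col" and lb: "\<And>col. lc r U b col = - l * r e col"
    and l0: "l \<noteq> 0" and X: "X \<subseteq> U" "supp a \<union> {e} \<subseteq> X"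
  shows "supp a \<union> {e} \<in> circs r X"
proof -
  define D1 where "D1 = supp a \<union> {e}"
  have CU: "C \<subseteq> U" using C by (auto simp: circs_def)
  have ae: "a e = 0" "b e = 0" using sa sb eC by (auto simp: supp_def)
  define c' where "c' = (\<lambda>f. a f - l * (if f = e then 1 else 0))"
  have "supp c' = D1" using ae l0 by (auto simp: supp_def c'_def D1_def)
  moreover have "lc r U c' col = 0" for col
    unfolding c'_def lc_diff lc_scale lc_delta[OF U eU] la by simp
  ultimately have dep: "\<not> lindep_free r D1"
    using dep_U[OF U, of D1 r] X D1_def by auto
  have mini: "lindep_free r D" if DD: "D \<subset> D1" for D
  proof (rule ccontr)
    assume "\<not> lindep_free r D"
    then obtain g where g: "supp g \<subseteq> D" "supp g \<noteq> {}" "\<forall>col. lc r U g col = 0"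
      using dep_U[OF U, of D r] DD X D1_def by auto
    show False
    proof (cases "g e = 0")
      case True
      then have "supp g \<subseteq> supp a" using g DD D1_def by (auto simp: supp_def)
      then have "supp g \<subseteq> C" using sa by auto
      then have "supp g = C" using circ_supp[OF U C _ _ g(2,3)] by auto
      then show False using \<open>supp g \<subseteq> supp a\<close> sb bne dis by auto
    next
      case False
      define h where "h = (\<lambda>f. b f + l * (if f = e then 1 else 0) - (l / g e) * g f)"
      have lh: "lc r U h col = 0" for col
        unfolding h_def lc_diff lc_add lc_scale lc_delta[OF U eU] lb using g(3) by simp
      have he: "h e = 0" using ae False by (simp add: h_def)
      have gsub: "supp g - {e} \<subseteq> supp a" using g DD D1_def by auto
      have hb: "h f = b f" if "f \<in> supp b" for f
      proof -
        have "f \<noteq> e" using that ae by (auto simp: supp_def)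
        moreover have "f \<notin> supp g" using that gsub dis \<open>f \<noteq> e\<close> by blast
        ultimately show ?thesis by (simp add: h_def supp_def)
      qed
      have "supp h \<subseteq> supp b \<union> (supp g - {e})"
        using he by (auto simp: h_def supp_def)
      then have hC: "supp h \<subseteq> C" using gsub sa sb by blast
      have "supp b \<subseteq> supp h" using hb by (auto simp: supp_def)
      then have "supp h \<noteq> {}" using bne by blast
      then have "supp h = C" using circ_supp[OF U C _ hC _] lh by auto
      then have "supp a \<subseteq> supp h" using sa by simp
      then have "supp a \<subseteq> supp g"
      proof -
        { fix f assume f: "f \<in> supp a"
          then have "f \<notin> supp b" "f \<noteq> e" using dis ae by (auto simp: supp_def)
          with f \<open>supp a \<subseteq> supp h\<close> have "h f \<noteq> 0" by (auto simp: supp_def)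
          then have "g f \<noteq> 0" using \<open>f \<notin> supp b\<close> \<open>f \<noteq> e\<close> by (auto simp: h_def supp_def)
          then have "f \<in> supp g" by (simp add: supp_def) }
        then show ?thesis by blast
      qed
      moreover have "e \<in> supp g" using False by (simp add: supp_def)
      ultimately have "D1 \<subseteq> D" using g(1) D1_def by auto
      then show False using DD by blast
    qed
  qed
  show ?thesis using dep mini X D1_def by (auto simp: circs_def)
qed


lemma par_abstract:
  fixes r :: "'e \<Rightarrow> 'c \<Rightarrow> real"
  assumes fin: "finite E1" "finite E2" and int: "E1 \<inter> E2 = {e}"
    and re: "r e col0 \<noteq> 0"
    and KEY: "\<And>a b. supp a \<subseteq> E1 \<Longrightarrow> supp b \<subseteq> E2 \<Longrightarrow>
               (\<forall>col. lc r (E1 \<union> E2) a col = lc r (E1 \<union> E2) b col)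
               \<Longrightarrow> \<exists>l. \<forall>col. lc r (E1 \<union> E2) a col = l * r e col"
  shows "circs r (E1 \<union> E2) = par_conn_circuits (circs r E1) (circs r E2) e"
proof
  define U where "U = E1 \<union> E2"
  have U: "finite U" using fin by (simp add: U_def)
  have eU: "e \<in> U" "e \<in> E1" "e \<in> E2" using int by (auto simp: U_def)
  have E1U: "E1 \<subseteq> U" and E2U: "E2 \<subseteq> U" by (auto simp: U_def)
  show "circs r (E1 \<union> E2) \<subseteq> par_conn_circuits (circs r E1) (circs r E2) e"
  proof
    fix C assume C0: "C \<in> circs r (E1 \<union> E2)"
    then have C: "C \<in> circs r U" by (simp add: U_def)
    have CU: "C \<subseteq> U" using C by (auto simp: circs_def)
    show "C \<in> par_conn_circuits (circs r E1) (circs r E2) e"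
    proof (cases "C \<subseteq> E1 \<or> C \<subseteq> E2")
      case True
      then show ?thesis using circs_sub[OF C] unfolding par_conn_circuits_def by blast
    next
      case False
      then obtain f1 f2 where f1: "f1 \<in> C" "f1 \<notin> E2" and f2: "f2 \<in> C" "f2 \<notin> E1" by blast
      have f1E: "f1 \<in> E1" "f1 \<noteq> e" using f1 CU eU by (auto simp: U_def)
      have f2E: "f2 \<in> E2" "f2 \<noteq> e" using f2 CU eU by (auto simp: U_def)
      obtain c where c: "supp c = C" "\<forall>col. lc r U c col = 0" using circ_dep[OF U C] by blast
      define a where "a = (\<lambda>f. if f \<in> E1 then c f else 0)"
      define b where "b = (\<lambda>f. if f \<in> E1 then 0 else c f)"
      have cab: "c f = a f + b f" for f by (simp add: a_def b_def)
      have sa: "supp a = C \<inter> E1" using c by (auto simp: a_def supp_def)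
      have sb: "supp b = C - E1" using c by (auto simp: b_def supp_def)
      have sbE2: "supp b \<subseteq> E2" using sb CU by (auto simp: U_def)
      have "lc r U a col = lc r U (\<lambda>f. (-1) * b f) col" for col
      proof -
        have "c = (\<lambda>f. a f + b f)" by (rule ext) (rule cab)
        then have "lc r U a col + lc r U b col = 0" using c(2) lc_add[of r U a b col] by simp
        then show ?thesis unfolding lc_scale by simp
      qed
      then obtain l where la: "\<And>col. lc r U a col = l * r e col"
        using KEY[of a "\<lambda>f. (-1) * b f"] sa sbE2 by (auto simp: U_def supp_def)
      have lb: "lc r U b col = - l * r e col" for col
      proof -
        have "c = (\<lambda>f. a f + b f)" by (rule ext) (rule cab)
        then have "lc r U a col + lc r U b col = 0" using c(2) lc_add[of r U a b col] by simp
        then show ?thesis using la by simp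
      qed
      have eC: "e \<notin> C"
      proof
        assume eC: "e \<in> C"
        define h where "h = (\<lambda>f. b f + l * (if f = e then 1 else 0))"
        have lh: "lc r U h col = 0" for col
          unfolding h_def lc_add lc_scale lc_delta[OF U eU(1)] lb by simp
        have "supp h \<subseteq> C" using sb eC by (auto simp: h_def supp_def)
        moreover have "f2 \<in> supp h" using f2 f2E c(1) by (auto simp: h_def b_def supp_def)
        ultimately have "supp h = C" using circ_supp[OF U C _ _ _] lh by blast
        moreover have "f1 \<notin> supp h" using f1E by (auto simp: h_def b_def supp_def)
        ultimately show False using f1 by blast
      qed
      have l0: "l \<noteq> 0"
      proof
        assume "l = 0"
        then have "\<forall>col. lc r U a col = 0" using la by simp
        moreover have "supp a \<noteq> {}" using sa f1 f1E by auto
        ultimately have "supp a = C" using circ_supp[OF U C _ _ _] sa by blast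
        then show False using sa f2 by auto
      qed
      have D1: "supp a \<union> {e} \<in> circs r E1"
        by (rule half[OF U C eU(1) eC, of a b c l]) (use sa sb f2 cab la lb l0 E1U eU in auto)
      have D2: "supp b \<union> {e} \<in> circs r E2"
        by (rule half[OF U C eU(1) eC, of b a c "-l"]) (use sa sb f1 f1E cab la lb l0 E2U eU sbE2 in auto)
      have "C = ((supp a \<union> {e}) \<union> (supp b \<union> {e})) - {e}" using sa sb eC by auto
      then show ?thesis using D1 D2 unfolding par_conn_circuits_def by blast
    qed
  qed
  show "par_conn_circuits (circs r E1) (circs r E2) e \<subseteq> circs r (E1 \<union> E2)"
  proof
    fix C assume "C \<in> par_conn_circuits (circs r E1) (circs r E2) e"
    then consider "C \<in> circs r E1" | "C \<in> circs r E2"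
      | C1 C2 where "C = (C1 \<union> C2) - {e}" "C1 \<in> circs r E1" "e \<in> C1" "C2 \<in> circs r E2" "e \<in> C2"
      unfolding par_conn_circuits_def by blast
    then show "C \<in> circs r (E1 \<union> E2)"
    proof cases
      case 1 then show ?thesis by (rule circs_mono) auto
    next
      case 2 then show ?thesis by (rule circs_mono) auto
    next
      case (3 C1 C2)
      have C1U: "C1 \<subseteq> E1" and C2U: "C2 \<subseteq> E2" using 3 by (auto simp: circs_def)
      have C12: "C1 \<inter> C2 = {e}" using C1U C2U int 3 by auto
      obtain c1 where c1: "supp c1 = C1" "\<forall>col. lc r U c1 col = 0" using circ_dep[OF U 3(2) E1U] by blast
      obtain c2 where c2: "supp c2 = C2" "\<forall>col. lc r U c2 col = 0" using circ_dep[OF U 3(4) E2U] by blast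
      have c1e: "c1 e \<noteq> 0" using 3(3) c1(1) unfolding supp_def by blast
      have c2e: "c2 e \<noteq> 0" using 3(5) c2(1) unfolding supp_def by blast
      have ne1: "C1 - {e} \<noteq> {}"
      proof
        assume "C1 - {e} = {}"
        then have "supp c1 \<subseteq> {e}" using c1(1) by blast
        then have "lc r U c1 col0 = c1 e * r e col0" by (rule lc_single[OF U eU(1)])
        then show False using c1(2) c1e re by simp
      qed
      have ne2: "C2 - {e} \<noteq> {}"
      proof
        assume "C2 - {e} = {}"
        then have "supp c2 \<subseteq> {e}" using c2(1) by blast
        then have "lc r U c2 col0 = c2 e * r e col0" by (rule lc_single[OF U eU(1)])
        then show False using c2(2) c2e re by simp
      qed
      define f where "f = (\<lambda>x. (1 / c1 e) * c1 x - (1 / c2 e) * c2 x)"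
      have lf: "lc r U f col = 0" for col
        unfolding f_def lc_diff lc_scale using c1 c2 by simp
      have "supp f = C"
      proof
        show "supp f \<subseteq> C"
          using c1e c2e c1 c2 3(1) by (auto simp: f_def supp_def)
        show "C \<subseteq> supp f"
        proof
          fix x assume x: "x \<in> C"
          show "x \<in> supp f"
          proof (cases "x \<in> C1")
            case True
            then have "x \<notin> C2" using x 3(1) C12 by auto
            then show ?thesis using True c1 c2 c1e by (auto simp: f_def supp_def)
          next
            case False
            then have "x \<in> C2" using x 3(1) by auto
            then show ?thesis using False c1 c2 c2e by (auto simp: f_def supp_def)
          qed
        qed
      qed
      have CU: "C \<subseteq> U" using 3(1) C1U C2U by (auto simp: U_def)
      have "supp f \<noteq> {}" using \<open>supp f = C\<close> ne1 3(1) by blast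
      then have dep: "\<not> lindep_free r C"
        using dep_U[OF U CU, of r] \<open>supp f = C\<close> lf by blast
      have mini: "lindep_free r D" if DD: "D \<subset> C" for D
      proof (rule ccontr)
        assume "\<not> lindep_free r D"
        then obtain g where g: "supp g \<subseteq> D" "supp g \<noteq> {}" "\<forall>col. lc r U g col = 0"
          using dep_U[OF U, of D r] DD CU by auto
        define a where "a = (\<lambda>x. if x \<in> E1 then g x else 0)"
        define b where "b = (\<lambda>x. if x \<in> E1 then 0 else g x)"
        have gab: "g x = a x + b x" for x by (simp add: a_def b_def)
        have sa: "supp a \<subseteq> C1 - {e}"
        proof
          fix x assume "x \<in> supp a"
          then have x: "x \<in> E1" "g x \<noteq> 0" by (auto simp: a_def supp_def split: if_splits)
          then have "x \<in> C1 \<union> C2 - {e}" using g(1) DD 3(1) by (auto simp: supp_def)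
          then show "x \<in> C1 - {e}" using x C2U int by blast
        qed
        have sb: "supp b \<subseteq> C2 - {e}" using g DD 3(1) C1U eU by (auto simp: b_def supp_def)
        have ab0: "lc r U a col + lc r U b col = 0" for col
        proof -
          have "g = (\<lambda>f. a f + b f)" by (rule ext) (rule gab)
          then show ?thesis using g(3) lc_add[of r U a b col] by simp
        qed
        have eq: "\<forall>col. lc r (E1 \<union> E2) a col = lc r (E1 \<union> E2) (\<lambda>f. (-1) * b f) col"
        proof
          fix col
          show "lc r (E1 \<union> E2) a col = lc r (E1 \<union> E2) (\<lambda>f. (-1) * b f) col"
            using ab0[of col] unfolding lc_scale U_def by simp
        qed
        have s1: "supp a \<subseteq> E1" using sa C1U by blast
        have s2: "supp (\<lambda>f. (-1) * b f) \<subseteq> E2" using sb C2U by (auto simp: supp_def)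
        obtain l where la0: "\<forall>col. lc r (E1 \<union> E2) a col = l * r e col"
          using KEY[OF s1 s2 eq] by blast
        have la: "lc r U a col = l * r e col" for col using la0 unfolding U_def by blast
        have lb: "lc r U b col = - l * r e col" for col using ab0[of col] la[of col] by simp
        show False
        proof (cases "l = 0")
          case True
          obtain x where x: "x \<in> supp g" using g(2) by blast
          show False
          proof (cases "x \<in> E1")
            case True
            then have "supp a \<noteq> {}" using x by (auto simp: a_def supp_def)
            moreover have "supp a \<subseteq> E1" using sa C1U by auto
            moreover have "\<forall>col. lc r U a col = 0" using la \<open>l = 0\<close> by simp
            ultimately have "supp a = C1" using circ_supp[OF U 3(2) E1U] sa by blast
            then show False using sa 3(3) by auto
          next
            case False
            then have "supp b \<noteq> {}" using x by (auto simp: b_def supp_def)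
            moreover have "\<forall>col. lc r U b col = 0" using lb \<open>l = 0\<close> by simp
            ultimately have "supp b = C2" using circ_supp[OF U 3(4) E2U] sb by blast
            then show False using sb 3(5) by auto
          qed
        next
          case False
          have ae: "a e = 0" "b e = 0" using sa sb by (auto simp: supp_def)
          define h1 where "h1 = (\<lambda>x. a x - l * (if x = e then 1 else 0))"
          define h2 where "h2 = (\<lambda>x. b x + l * (if x = e then 1 else 0))"
          have "lc r U h1 col = 0" for col
            unfolding h1_def lc_diff lc_scale lc_delta[OF U eU(1)] la by simp
          moreover have "supp h1 \<subseteq> C1" using sa 3(3) by (auto simp: h1_def supp_def)
          moreover have "e \<in> supp h1" using ae False by (simp add: h1_def supp_def)
          ultimately have "supp h1 = C1" using circ_supp[OF U 3(2) E1U] by blast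
          then have s1: "C1 - {e} \<subseteq> supp g" by (auto simp: h1_def supp_def a_def split: if_splits)
          have "lc r U h2 col = 0" for col
            unfolding h2_def lc_add lc_scale lc_delta[OF U eU(1)] lb by simp
          moreover have "supp h2 \<subseteq> C2" using sb 3(5) by (auto simp: h2_def supp_def)
          moreover have "e \<in> supp h2" using ae False by (simp add: h2_def supp_def)
          ultimately have "supp h2 = C2" using circ_supp[OF U 3(4) E2U] by blast
          then have s2: "C2 - {e} \<subseteq> supp g" by (auto simp: h2_def supp_def b_def split: if_splits)
          have "C \<subseteq> D" using s1 s2 g(1) 3(1) by auto
          then show False using DD by blast
        qed
      qed
      show ?thesis using dep mini CU by (auto simp: circs_def U_def)
    qed
  qed
qed


lemma the_other1: "u \<noteq> v \<Longrightarrow> (THE x. x \<in> {u,v} \<and> x \<noteq> u) = v"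
  by (rule the_equality) auto
lemma the_other2: "u \<noteq> v \<Longrightarrow> (THE x. x \<in> {u,v} \<and> x \<noteq> v) = u"
  by (rule the_equality) auto

lemma row_pair:
  assumes "u \<noteq> v"
  shows "rig_row d p {u,v} (w,k) =
    (if k < d \<and> w = u then p u k - p v k else if k < d \<and> w = v then p v k - p u k else 0)"
  using assms the_other1[OF assms] the_other2[OF assms] by (auto simp: rig_row_def)

lemma row_zero: "w \<notin> f \<or> \<not> k < d \<Longrightarrow> rig_row d p f (w,k) = 0"
  by (auto simp: rig_row_def)

lemma sum_pair:
  assumes "finite V" "a0 \<in> V" "b0 \<in> V" "a0 \<noteq> b0" "\<forall>v\<in>V - {a0,b0}. g v = 0"
  shows "sum g V = g a0 + g b0"
proof -
  have "sum g V = sum g {a0,b0}" by (rule sum.mono_neutral_right) (use assms in auto)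
  then show ?thesis using assms(4) by simp
qed

lemma row_trans:
  assumes "finite V" "f \<subseteq> V" "card f = 2"
  shows "(\<Sum>v\<in>V. rig_row d p f (v,i)) = 0"
proof -
  obtain u v' where f: "f = {u,v'}" "u \<noteq> v'" using assms(3) card_2_iff by metis
  have "(\<Sum>v\<in>V. rig_row d p f (v,i)) = rig_row d p f (u,i) + rig_row d p f (v',i)"
    by (rule sum_pair) (use assms f in \<open>auto intro: row_zero\<close>)
  then show ?thesis using f by (simp add: row_pair)
qed

lemma row_rot:
  assumes "finite V" "f \<subseteq> V" "card f = 2" "i < d" "j < d"
  shows "(\<Sum>v\<in>V. rig_row d p f (v,i) * p v j - rig_row d p f (v,j) * p v i) = 0"
proof -
  obtain u v' where f: "f = {u,v'}" "u \<noteq> v'" using assms(3) card_2_iff by metis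
  have "(\<Sum>v\<in>V. rig_row d p f (v,i) * p v j - rig_row d p f (v,j) * p v i)
     = (rig_row d p f (u,i) * p u j - rig_row d p f (u,j) * p u i)
       + (rig_row d p f (v',i) * p v' j - rig_row d p f (v',j) * p v' i)"
    by (rule sum_pair) (use assms f in \<open>auto simp: row_zero\<close>)
  also have "\<dots> = 0" unfolding f(1) using f(2) assms(4,5) by (simp add: row_pair algebra_simps)
  finally show ?thesis .
qed

lemma lc_trans:
  assumes "finite V" "finite U" "\<forall>f\<in>U. f \<subseteq> V \<and> card f = 2"
  shows "(\<Sum>v\<in>V. lc (rig_row d p) U a (v,i)) = 0"
proof -
  have "(\<Sum>v\<in>V. lc (rig_row d p) U a (v,i)) = (\<Sum>f\<in>U. \<Sum>v\<in>V. a f * rig_row d p f (v,i))"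
    unfolding lc_def by (rule sum.swap)
  also have "\<dots> = (\<Sum>f\<in>U. a f * (\<Sum>v\<in>V. rig_row d p f (v,i)))"
    by (simp add: sum_distrib_left)
  also have "\<dots> = 0" by (rule sum.neutral) (use assms in \<open>auto simp: row_trans[OF assms(1)]\<close>)
  finally show ?thesis .
qed

lemma lc_rot:
  assumes "finite V" "finite U" "\<forall>f\<in>U. f \<subseteq> V \<and> card f = 2" "i < d" "j < d"
  shows "(\<Sum>v\<in>V. lc (rig_row d p) U a (v,i) * p v j - lc (rig_row d p) U a (v,j) * p v i) = 0"
proof -
  have "(\<Sum>v\<in>V. lc (rig_row d p) U a (v,i) * p v j - lc (rig_row d p) U a (v,j) * p v i)
     = (\<Sum>v\<in>V. \<Sum>f\<in>U. a f * (rig_row d p f (v,i) * p v j - rig_row d p f (v,j) * p v i))"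
    unfolding lc_def by (rule sum.cong[OF refl]) (simp add: right_diff_distrib sum_subtractf sum_distrib_right mult.assoc)
  also have "\<dots> = (\<Sum>f\<in>U. \<Sum>v\<in>V. a f * (rig_row d p f (v,i) * p v j - rig_row d p f (v,j) * p v i))"
    by (rule sum.swap)
  also have "\<dots> = (\<Sum>f\<in>U. a f * (\<Sum>v\<in>V. rig_row d p f (v,i) * p v j - rig_row d p f (v,j) * p v i))"
    by (simp add: sum_distrib_left)
  also have "\<dots> = 0" by (rule sum.neutral) (use assms in \<open>auto simp: row_rot[OF assms(1) _ _ assms(4,5)]\<close>)
  finally show ?thesis .
qed

lemma generic_distinct:
  assumes g: "generic d V p" and V: "finite V" and ab: "a0 \<in> V" "b0 \<in> V" "a0 \<noteq> b0" and d: "d \<ge> 1"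
  shows "p a0 0 \<noteq> p b0 0"
proof
  assume eq: "p a0 0 = p b0 0"
  define X where "X = V \<times> {..<d}"
  define x where "x = (\<lambda>(v::'a, i::nat). p v i)"
  define m1 where "m1 = (\<lambda>z. if z = (a0, 0::nat) then 1 else (0::nat))"
  define m2 where "m2 = (\<lambda>z. if z = (b0, 0::nat) then 1 else (0::nat))"
  define c where "c = (\<lambda>m. if m = m1 then (1::rat) else -1)"
  have X: "finite X" "(a0,0) \<in> X" "(b0,0) \<in> X" using V ab d by (auto simp: X_def)
  have m12: "m1 \<noteq> m2"
  proof
    assume "m1 = m2" then have "m1 (a0,0) = m2 (a0,0)" by simp
    then show False using ab by (simp add: m1_def m2_def)
  qed
  have pr: "(\<Prod>z\<in>X. x z ^ (if z = t then 1 else 0)) = x t" if "t \<in> X" for t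
  proof -
    have "(\<Prod>z\<in>X. x z ^ (if z = t then 1 else 0)) = (\<Prod>z\<in>X. if z = t then x z else 1)"
      by (rule prod.cong) auto
    also have "\<dots> = x t" using X(1) that by simp
    finally show ?thesis .
  qed
  have P1: "(\<Prod>a\<in>X. x a ^ m1 a) = p a0 0" using pr[OF X(2)] by (simp add: m1_def x_def)
  have P2: "(\<Prod>a\<in>X. x a ^ m2 a) = p b0 0" using pr[OF X(3)] by (simp add: m2_def x_def)
  have "(\<Sum>m\<in>{m1,m2}. of_rat (c m) * (\<Prod>a\<in>X. x a ^ m a))
      = of_rat (c m1) * (\<Prod>a\<in>X. x a ^ m1 a) + of_rat (c m2) * (\<Prod>a\<in>X. x a ^ m2 a)"
    using m12 by simp
  also have "\<dots> = 0" unfolding P1 P2 using m12 eq by (simp add: c_def)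
  finally have S0: "(\<Sum>m\<in>{m1,m2}. of_rat (c m) * (\<Prod>a\<in>X. x a ^ m a)) = 0" .
  have Ms: "\<forall>m\<in>{m1,m2}. \<forall>a. m a \<noteq> 0 \<longrightarrow> a \<in> X"
    using X by (auto simp: m1_def m2_def)
  have "\<forall>m\<in>{m1,m2}. c m = 0"
  proof -
    have ai: "alg_indep_rat X x" using g unfolding generic_def X_def x_def .
    have fin: "finite {m1,m2}" by simp
    have imp: "finite {m1,m2} \<and> (\<forall>m\<in>{m1,m2}. \<forall>a. m a \<noteq> 0 \<longrightarrow> a \<in> X) \<and>
        (\<Sum>m\<in>{m1,m2}. of_rat (c m) * (\<Prod>a\<in>X. x a ^ m a)) = 0 \<longrightarrow> (\<forall>m\<in>{m1,m2}. c m = 0)"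
      using ai unfolding alg_indep_rat_def by blast
    show ?thesis using imp fin Ms S0 by blast
  qed
  then show False by (simp add: c_def)
qed


lemma key_conc:
  fixes a b :: "'v set \<Rightarrow> real"
  assumes G1: "simple_graph V1 E1" and G2: "simple_graph V2 E2"
    and e: "V1 \<inter> V2 = {a0,b0}" "a0 \<noteq> b0" and q0: "p a0 0 \<noteq> p b0 0" and d: "d \<ge> 1"
    and sa: "supp a \<subseteq> E1" and sb: "supp b \<subseteq> E2"
    and eq: "\<forall>col. lc (rig_row d p) (E1 \<union> E2) a col = lc (rig_row d p) (E1 \<union> E2) b col"
  shows "\<exists>l. \<forall>col. lc (rig_row d p) (E1 \<union> E2) a col = l * rig_row d p {a0,b0} col"
proof -
  define U where "U = E1 \<union> E2"
  define V where "V = V1 \<union> V2"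
  define w where "w = lc (rig_row d p) U a"
  have fV: "finite V1" "finite V2" using G1 G2 by (auto simp: simple_graph_def)
  have E1P: "E1 \<subseteq> Pow V1" and E2P: "E2 \<subseteq> Pow V2" using G1 G2 by (auto simp: simple_graph_def)
  have fE: "finite E1" "finite E2"
    using finite_subset[OF E1P] finite_subset[OF E2P] fV by auto
  have fU: "finite U" "finite V" using fE fV by (auto simp: U_def V_def)
  have edges: "\<forall>f\<in>U. f \<subseteq> V \<and> card f = 2" using G1 G2 by (auto simp: simple_graph_def U_def V_def)
  have abV: "a0 \<in> V" "b0 \<in> V" using e by (auto simp: V_def)
  have zero: "w (v,k) = 0" if vk: "v \<notin> {a0,b0} \<or> \<not> k < d" for v k
  proof (cases "k < d")
    case False
    then show ?thesis unfolding w_def lc_def by (simp add: row_zero)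
  next
    case True
    then have "v \<notin> V1 \<or> v \<notin> V2" using vk e by blast
    then show ?thesis
    proof
      assume v: "v \<notin> V1"
      have "(\<Sum>f\<in>U. a f * rig_row d p f (v,k)) = 0"
      proof (rule sum.neutral, rule ballI)
        fix f assume "f \<in> U"
        show "a f * rig_row d p f (v,k) = 0"
        proof (cases "a f = 0")
          case False
          then have "f \<in> E1" using sa by (auto simp: supp_def)
          then have "v \<notin> f" using v G1 by (auto simp: simple_graph_def)
          then show ?thesis by (simp add: row_zero)
        qed simp
      qed
      then show ?thesis unfolding w_def lc_def .
    next
      assume v: "v \<notin> V2"
      have "(\<Sum>f\<in>U. b f * rig_row d p f (v,k)) = 0"
      proof (rule sum.neutral, rule ballI)
        fix f assume "f \<in> U"
        show "b f * rig_row d p f (v,k) = 0"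
        proof (cases "b f = 0")
          case False
          then have "f \<in> E2" using sb by (auto simp: supp_def)
          then have "v \<notin> f" using v G2 by (auto simp: simple_graph_def)
          then show ?thesis by (simp add: row_zero)
        qed simp
      qed
      then have "lc (rig_row d p) U b (v,k) = 0" unfolding lc_def .
      then show ?thesis using eq unfolding w_def U_def by simp
    qed
  qed
  have trans: "w (a0,i) + w (b0,i) = 0" if i: "i < d" for i
  proof -
    have "(\<Sum>v\<in>V. w (v,i)) = 0" unfolding w_def by (rule lc_trans[OF fU(2) fU(1) edges])
    moreover have "(\<Sum>v\<in>V. w (v,i)) = w (a0,i) + w (b0,i)"
      by (rule sum_pair[OF fU(2) abV e(2)]) (use zero in auto)
    ultimately show ?thesis by simp
  qed
  have rot: "(w (a0,i) * p a0 j - w (a0,j) * p a0 i) + (w (b0,i) * p b0 j - w (b0,j) * p b0 i) = 0"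
    if "i < d" "j < d" for i j
  proof -
    have "(\<Sum>v\<in>V. w (v,i) * p v j - w (v,j) * p v i) = 0" unfolding w_def
      by (rule lc_rot[OF fU(2) fU(1) edges that])
    moreover have "(\<Sum>v\<in>V. w (v,i) * p v j - w (v,j) * p v i)
        = (w (a0,i) * p a0 j - w (a0,j) * p a0 i) + (w (b0,i) * p b0 j - w (b0,j) * p b0 i)"
      by (rule sum_pair[OF fU(2) abV e(2)]) (use zero in auto)
    ultimately show ?thesis by simp
  qed
  define q where "q = (\<lambda>k. p a0 k - p b0 k)"
  define l where "l = w (a0,0) / q 0"
  have q0': "q 0 \<noteq> 0" using q0 by (simp add: q_def)
  have d0: "0 < d" using d by simp
  have xk: "w (a0,k) = l * q k" if k: "k < d" for k
  proof -
    have r1: "(w (a0,k) * p a0 0 - w (a0,0) * p a0 k) + (w (b0,k) * p b0 0 - w (b0,0) * p b0 k) = 0"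
      using rot[OF k d0] .
    have t1: "w (b0,k) = - w (a0,k)" using trans[OF k] by simp
    have t0: "w (b0,0) = - w (a0,0)" using trans[OF d0] by simp
    have "w (a0,k) * q 0 = w (a0,0) * q k"
      using r1 unfolding t1 t0 q_def by (simp add: algebra_simps)
    then show ?thesis unfolding l_def using q0' by (simp add: field_simps)
  qed
  have "\<forall>col. w col = l * rig_row d p {a0,b0} col"
  proof
    fix col :: "'v \<times> nat"
    obtain v k where col: "col = (v,k)" by (cases col)
    show "w col = l * rig_row d p {a0,b0} col"
    proof (cases "k < d \<and> v \<in> {a0,b0}")
      case True
      then consider "v = a0" | "v = b0" by blast
      then show ?thesis
      proof cases
        case 1 then show ?thesis using True xk e(2) col by (simp add: row_pair q_def)
      next
        case 2
        have "w (b0,k) = - w (a0,k)" using trans True by (simp add: add_eq_0_iff)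
        then show ?thesis using True xk e(2) col 2 by (simp add: row_pair q_def algebra_simps)
      qed
    next
      case False
      then show ?thesis using zero col by (auto simp: row_zero)
    qed
  qed
  then show ?thesis unfolding w_def U_def by blast
qed

lemma circs_remove: "circs r (E - {x}) = {C \<in> circs r E. x \<notin> C}"
  by (auto simp: circs_def)

theorem theorem3p3:
  fixes V1 V2 :: "'v set" and E1 E2 :: "'v set set" and e :: "'v set"
    and d :: nat and p :: "'v \<Rightarrow> nat \<Rightarrow> real"
  assumes "d \<ge> 1"
    and "simple_graph V1 E1" and "simple_graph V2 E2"
    and "card (V1 \<inter> V2) = 2" and "e = V1 \<inter> V2"
    and "E1 \<inter> E2 = {e}"
    and "generic d (V1 \<union> V2) p"
    and "\<not> is_coloop (rig_circuits d p E1) e"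
    and "\<not> is_coloop (rig_circuits d p E2) e"
  shows "rig_circuits d p (E1 \<union> E2)
           = par_conn_circuits (rig_circuits d p E1) (rig_circuits d p E2) e
       \<and> rig_circuits d p ((E1 \<union> E2) - {e})
           = two_sum_circuits (rig_circuits d p E1) (rig_circuits d p E2) e"
proof -
  obtain a0 b0 where ab: "V1 \<inter> V2 = {a0,b0}" "a0 \<noteq> b0" using assms(4) card_2_iff by metis
  have fV: "finite V1" "finite V2" using assms(2,3) by (auto simp: simple_graph_def)
  have E1P: "E1 \<subseteq> Pow V1" and E2P: "E2 \<subseteq> Pow V2" using assms(2,3) by (auto simp: simple_graph_def)
  have fE: "finite E1" "finite E2"
    using finite_subset[OF E1P] finite_subset[OF E2P] fV by auto
  have q0: "p a0 0 \<noteq> p b0 0"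
    by (rule generic_distinct[OF assms(7)]) (use fV ab assms(1) in auto)
  have rig: "rig_circuits d p E = circs (rig_row d p) E" for E
    unfolding rig_circuits_def circs_def rig_indep_def lindep_free_def by simp
  have eab: "e = {a0,b0}" using assms(5) ab by simp
  have re: "rig_row d p e (a0,0) \<noteq> 0" using q0 ab(2) assms(1) unfolding eab by (simp add: row_pair)
  have KEY: "\<exists>l. \<forall>col. lc (rig_row d p) (E1 \<union> E2) a col = l * rig_row d p e col"
    if "supp a \<subseteq> E1" "supp b \<subseteq> E2"
      "\<forall>col. lc (rig_row d p) (E1 \<union> E2) a col = lc (rig_row d p) (E1 \<union> E2) b col"
    for a b :: "'v set \<Rightarrow> real"
    unfolding eab by (rule key_conc[OF assms(2,3) ab q0 assms(1) that])
  have P: "circs (rig_row d p) (E1 \<union> E2) = par_conn_circuits (circs (rig_row d p) E1) (circs (rig_row d p) E2) e"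
    by (rule par_abstract[of E1 E2 e "rig_row d p" "(a0,0)", OF fE assms(6) re KEY])
  have T: "{C \<in> par_conn_circuits A B e. e \<notin> C} = two_sum_circuits A B e" for A B :: "'v set set set"
    unfolding par_conn_circuits_def two_sum_circuits_def by auto
  show ?thesis unfolding rig circs_remove P T by simp
qed

end
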